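(* Let $n\ge 1$, $N=2^n$ and $s=(N-1)/2$. Let $0\le j<N/2$ be an integer and let $z=W^{(N)}_j$ be the $j$-th Hadamard codeword. Then $$\hat H^{\otimes n}\,\hat U_z\,\hat H^{\otimes n}\left(\left|\tfrac12\right\rangle_s+\left|-\tfrac12\right\rangle_s\right)=\left|\tfrac12+j\right\rangle_s+\left|-\tfrac12-j\right\rangle_s .$$
   Context: Work in $\mathbb{C}^N$ with computational basis $\{|y\rangle : y=0,1,\dots,N-1\}$. The spin basis states $|m\rangle_s$, $m\in\{-s,-s+1,\dots,s\}$, are identified with computational basis states via $|m\rangle_s=|m+s\rangle$; for example $|\tfrac12\rangle_s=|N/2\rangle$ and $|-\tfrac12\rangle_s=|N/2-1\rangle$. For $x,y\in\{0,\dots,N-1\}$ let $x\cdot y\in\{0,1\}$ be the inner product modulo 2 of their $n$-bit binary expansions. $\hat H^{\otimes n}$ is the $n$-qubit Hadamard transform, $\hat H^{\otimes n}|y\rangle=N^{-1/2}\sum_{x=0}^{N-1}(-1)^{x\cdot y}|x\rangle$. For $j\in\{0,\dots,N-1\}$ the Hadamard codeword $W^{(N)}_j\in\{0,1\}^N$ is the bit string whose bit at position $x\in\{0,\dots,N-1\}$ is $x\cdot j$. For a string $z=(z_0,\dots,z_{N-1})\in\{0,1\}^N$, the oracle $\hat U_z$ is the diagonal unitary $\hat U_z|x\rangle=(-1)^{z_x}|x\rangle$. *)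

theory Defs
  imports Complex_Main
begin

(* Vectors in C^N (N = 2^n) are modelled as functions nat => complex,
  with coordinates indexed by the computational basis 0..N-1 (zero outside). *)

definition bdot :: "nat \<Rightarrow> nat \<Rightarrow> nat \<Rightarrow> nat" where
  "bdot n x y = card {i. i < n \<and> bit x i \<and> bit y i} mod 2"

definition ket :: "nat \<Rightarrow> nat \<Rightarrow> nat \<Rightarrow> complex" where
  "ket N k = (\<lambda>y. if y = k \<and> k < N then 1 else 0)"

definition spin_ket :: "nat \<Rightarrow> real \<Rightarrow> nat \<Rightarrow> complex" where
  "spin_ket N m = ket N (nat \<lfloor>m + (real N - 1) / 2\<rfloor>)"

definition hadamard :: "nat \<Rightarrow> (nat \<Rightarrow> complex) \<Rightarrow> nat \<Rightarrow> complex" where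
  "hadamard n v = (\<lambda>x. if x < 2 ^ n then
      complex_of_real (1 / sqrt (2 ^ n)) * (\<Sum>y<2 ^ n. (-1) ^ bdot n x y * v y) else 0)"

definition hadamard_codeword :: "nat \<Rightarrow> nat \<Rightarrow> nat \<Rightarrow> nat" where
  "hadamard_codeword n j = (\<lambda>x. bdot n x j)"

definition phase_oracle :: "nat \<Rightarrow> (nat \<Rightarrow> nat) \<Rightarrow> (nat \<Rightarrow> complex) \<Rightarrow> nat \<Rightarrow> complex" where
  "phase_oracle N z v = (\<lambda>x. if x < N then (-1) ^ z x * v x else 0)"

end

theory Submission
  imports Defs
begin

unbundle bit_operations_syntax

lemma card_sign:
  fixes n :: nat
  shows "(-1::complex) ^ card {i. i < n \<and> P i} = (\<Prod>i<n. if P i then -1 else 1)"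
proof (induction n)
  case 0 then show ?case by simp
next
  case (Suc n)
  have "{i. i < Suc n \<and> P i} = {i. i < n \<and> P i} \<union> (if P n then {n} else {})"
    by (auto simp: less_Suc_eq)
  moreover have "finite {i. i < n \<and> P i}" by simp
  ultimately show ?case using Suc by (auto simp: card_insert_if)
qed

lemma bdot_sign:
  "(-1::complex) ^ bdot n x a = (\<Prod>i<n. if bit x i \<and> bit a i then -1 else 1)"
  unfolding bdot_def by (simp add: minus_one_power_iff card_sign[symmetric])

lemma sum_double:
  "(\<Sum>x<2*m. g x) = (\<Sum>x<m. g (2*x) + g (2*x+1::nat)) " for g :: "nat \<Rightarrow> complex"
  by (induction m) (simp_all add: sum.distrib)

lemma charsum:
  "(\<Sum>x<(2::nat)^n. \<Prod>i<n. f i (bit x i)) = (\<Prod>i<n. f i False + f i True)"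
  for f :: "nat \<Rightarrow> bool \<Rightarrow> complex"
proof (induction n arbitrary: f)
  case 0 then show ?case by simp
next
  case (Suc n)
  have e0: "(\<Prod>i<Suc n. f i (bit (2*x) i)) = f 0 False * (\<Prod>i<n. f (Suc i) (bit x i))" for x :: nat
    by (simp only: prod.lessThan_Suc_shift) (simp add: bit_Suc bit_0)
  have e1: "(\<Prod>i<Suc n. f i (bit (2*x+1) i)) = f 0 True * (\<Prod>i<n. f (Suc i) (bit x i))" for x :: nat
    by (simp only: prod.lessThan_Suc_shift) (simp add: bit_Suc bit_0)
  have "(\<Sum>x<(2::nat)^Suc n. \<Prod>i<Suc n. f i (bit x i))
      = (\<Sum>x<(2::nat)^n. (f 0 False + f 0 True) * (\<Prod>i<n. f (Suc i) (bit x i)))"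
    by (simp only: power_Suc sum_double e0 e1 distrib_right)
  also have "\<dots> = (f 0 False + f 0 True) * (\<Prod>i<n. f (Suc i) False + f (Suc i) True)"
    by (simp add: sum_distrib_left[symmetric] Suc.IH[of "\<lambda>i. f (Suc i)"])
  also have "\<dots> = (\<Prod>i<Suc n. f i False + f i True)"
    by (rule prod.lessThan_Suc_shift[symmetric])
  finally show ?case .
qed

lemma charsum_bdot:
  "(\<Sum>x<(2::nat)^n. (-1::complex) ^ bdot n x a) = (if \<forall>i<n. \<not> bit a i then 2^n else 0)"
proof -
  have "(\<Sum>x<(2::nat)^n. (-1::complex) ^ bdot n x a)
     = (\<Sum>x<(2::nat)^n. \<Prod>i<n. (\<lambda>i b. if b \<and> bit a i then -1 else 1::complex) i (bit x i))"
    by (simp add: bdot_sign)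
  also have "\<dots> = (\<Prod>i<n. (1::complex) + (if bit a i then -1 else 1))"
    by (subst charsum) simp
  also have "\<dots> = (if \<forall>i<n. \<not> bit a i then 2^n else 0)"
  proof (cases "\<forall>i<n. \<not> bit a i")
    case True
    then have "(\<Prod>i<n. (1::complex) + (if bit a i then -1 else 1)) = (\<Prod>i<n. 2)"
      by (intro prod.cong) auto
    then show ?thesis using True by simp
  next
    case False
    then obtain i where "i < n" "bit a i" by auto
    then show ?thesis using False by (simp add: prod_zero_iff) (metis add.right_inverse lessThan_iff)
  qed
  finally show ?thesis .
qed

lemma sign_mult:
  "(-1::complex) ^ bdot n x a * (-1) ^ bdot n x b = (-1) ^ bdot n x (a XOR b)"
  unfolding bdot_sign prod.distrib[symmetric]
  by (intro prod.cong) (auto simp: bit_xor_iff)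

lemma bit_lt: "(j::nat) < 2^m \<Longrightarrow> bit j i \<Longrightarrow> i < m"
  by (metis bit_take_bit_iff take_bit_nat_eq_self_iff)

lemma eq_by_bits:
  assumes "(a::nat) < 2^n" "b < 2^n" "\<forall>i<n. bit a i = bit b i"
  shows "a = b"
proof (rule bit_eqI)
  fix i show "bit a i = bit b i"
    using assms bit_lt[of a n i] bit_lt[of b n i] by (cases "i < n") auto
qed

lemma xor_lt: "(a::nat) < 2^n \<Longrightarrow> b < 2^n \<Longrightarrow> a XOR b < 2^n"
  by (metis take_bit_nat_eq_self_iff take_bit_xor)

lemma xor_pow: "(j::nat) < 2^m \<Longrightarrow> 2^m XOR j = 2^m + j"
proof -
  assume j: "j < 2^m"
  have "2^m + j = 2^m OR j"
    by (rule disjunctive_add) (use j bit_lt[of j m] in \<open>auto simp: bit_exp_iff\<close>)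
  also have "\<dots> = 2^m XOR j"
    by (rule bit_eqI) (use j bit_lt[of j m] in \<open>auto simp: bit_or_iff bit_xor_iff bit_exp_iff\<close>)
  finally show ?thesis by simp
qed

lemma xor_mask: "(j::nat) < 2^m \<Longrightarrow> (2^m - 1) XOR j = 2^m - 1 - j"
proof -
  assume j: "j < 2^m"
  define a :: nat where "a = 2^m - 1"
  have ba: "bit a i \<longleftrightarrow> i < m" for i
    using bit_mask_iff[where 'a=nat, of m i] unfolding a_def mask_eq_exp_minus_1 by simp
  have "(a XOR j) + j = (a XOR j) OR j"
    by (rule disjunctive_add) (use j bit_lt[of j m] ba in \<open>auto simp: bit_xor_iff\<close>)
  also have "\<dots> = a"
    by (rule bit_eqI) (use j bit_lt[of j m] ba in \<open>auto simp: bit_or_iff bit_xor_iff\<close>)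
  finally show ?thesis unfolding a_def by linarith
qed

lemma bdot_comm: "bdot n x y = bdot n y x"
  by (simp add: bdot_def conj_commute)

lemma norm_const: "complex_of_real (1 / sqrt (2 ^ n)) * complex_of_real (1 / sqrt (2 ^ n)) * 2 ^ n = 1"
proof -
  have "(1 / sqrt (2 ^ n)) * (1 / sqrt (2 ^ n)) * (2::real) ^ n = 1"
    by (simp add: field_simps)
  then have "complex_of_real ((1 / sqrt (2 ^ n)) * (1 / sqrt (2 ^ n)) * (2::real) ^ n) = 1" by simp
  then show ?thesis by (simp only: of_real_mult of_real_power of_real_numeral)
qed

lemma HUH:
  fixes v :: "nat \<Rightarrow> complex"
  assumes vs: "\<And>w. w \<ge> 2^n \<Longrightarrow> v w = 0" and j: "j < 2^n"
  shows "hadamard n (phase_oracle (2 ^ n) (hadamard_codeword n j) (hadamard n v)) y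
         = (if y < 2^n then v (y XOR j) else 0)"
proof (cases "y < 2^n")
  case False then show ?thesis by (simp add: hadamard_def)
next
  case y: True
  define c where "c = complex_of_real (1 / sqrt (2 ^ n))"
  define N :: nat where "N = 2^n"
  let ?s = "\<lambda>x a. (-1::complex) ^ bdot n x a"
  have "hadamard n (phase_oracle (2 ^ n) (hadamard_codeword n j) (hadamard n v)) y
     = c * (\<Sum>x<N. (-1::complex) ^ bdot n y x * (?s x j * (c * (\<Sum>w<N. ?s x w * v w))))"
    using y by (simp add: hadamard_def phase_oracle_def hadamard_codeword_def c_def N_def)
  also have "\<dots> = c * c * (\<Sum>x<N. \<Sum>w<N. v w * ?s x (y XOR j XOR w))"
    by (simp add: bdot_comm[of n y] sum_distrib_left sum_distrib_right mult_ac sign_mult[symmetric])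
  also have "\<dots> = c * c * (\<Sum>w<N. v w * (\<Sum>x<N. ?s x (y XOR j XOR w)))"
    by (subst sum.swap) (simp add: sum_distrib_left)
  also have "\<dots> = c * c * (\<Sum>w<N. if w = y XOR j then v w * 2^n else 0)"
  proof -
    have "v w * (\<Sum>x<N. ?s x (y XOR j XOR w)) = (if w = y XOR j then v w * 2^n else 0)"
      if w: "w \<in> {..<N}" for w
    proof -
      have "(\<forall>i<n. \<not> bit (y XOR j XOR w) i) \<longleftrightarrow> w = y XOR j"
      proof
        assume h: "\<forall>i<n. \<not> bit (y XOR j XOR w) i"
        show "w = y XOR j"
          by (rule eq_by_bits[of _ n]) (use h w y j xor_lt in \<open>auto simp: N_def bit_xor_iff\<close>)
      qed (auto simp: bit_xor_iff)
      then show ?thesis unfolding N_def by (simp add: charsum_bdot)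
    qed
    then show ?thesis by (intro arg_cong[where f="\<lambda>t. c * c * t"] sum.cong) auto
  qed
  also have "\<dots> = c * c * 2^n * v (y XOR j)"
    using y j xor_lt[of y n j] by (simp add: N_def)
  also have "\<dots> = v (y XOR j)"
    using norm_const[of n] unfolding c_def by simp
  finally show ?thesis using y by simp
qed

lemma spin_eq: "real k = m + (real N - 1) / 2 \<Longrightarrow> spin_ket N m = ket N k"
  unfolding spin_ket_def by (metis floor_of_nat nat_int)

theorem lemma1:
  fixes n j :: nat
  assumes "n \<ge> 1" and "j < 2 ^ n div 2"
  shows "hadamard n (phase_oracle (2 ^ n) (hadamard_codeword n j)
            (hadamard n (\<lambda>y. spin_ket (2 ^ n) (1/2) y + spin_ket (2 ^ n) (-1/2) y)))
         = (\<lambda>y. spin_ket (2 ^ n) (1/2 + real j) y + spin_ket (2 ^ n) (-1/2 - real j) y)"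
proof -
  define m where "m = n - 1"
  define M :: nat where "M = 2^m"
  have N: "(2::nat)^n = 2 * M" using assms(1) unfolding M_def m_def
    by (metis Suc_diff_1 less_le_trans power_Suc zero_less_one)
  have jM: "j < M" using assms(2) N by simp
  have M1: "M \<ge> 1" unfolding M_def by simp
  have s1: "spin_ket (2^n) (1/2) = ket (2^n) M"
    by (rule spin_eq) (simp add: N field_simps)
  have s2: "spin_ket (2^n) (-1/2) = ket (2^n) (M - 1)"
    by (rule spin_eq) (use M1 in \<open>simp add: N of_nat_diff field_simps\<close>)
  have s3: "spin_ket (2^n) (1/2 + real j) = ket (2^n) (M + j)"
    by (rule spin_eq) (simp add: N field_simps)
  have s4: "spin_ket (2^n) (-1/2 - real j) = ket (2^n) (M - 1 - j)"
    by (rule spin_eq) (use M1 jM in \<open>simp add: N of_nat_diff field_simps\<close>)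
  have jn: "j < 2^n" using jM N by simp
  have vs: "\<And>w. w \<ge> 2^n \<Longrightarrow> ket (2^n) M w + ket (2^n) (M - 1) w = 0"
    by (simp add: ket_def)
  have x1: "M XOR j = M + j" unfolding M_def by (rule xor_pow) (use jM M_def in simp)
  have x2: "(M - 1) XOR j = M - 1 - j" unfolding M_def by (rule xor_mask) (use jM M_def in simp)
  have x2': "(M - Suc 0) XOR j = M - Suc j" using x2 by simp
  have inv: "y XOR j = k \<longleftrightarrow> y = k XOR j" for y k :: nat
    by (metis xor.assoc xor_self_eq xor.right_neutral)
  show ?thesis
    unfolding s1 s2 s3 s4
  proof
    fix y
    show "hadamard n (phase_oracle (2 ^ n) (hadamard_codeword n j)
            (hadamard n (\<lambda>y. ket (2 ^ n) M y + ket (2 ^ n) (M - 1) y))) y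
         = ket (2 ^ n) (M + j) y + ket (2 ^ n) (M - 1 - j) y"
      apply (subst HUH[where v="\<lambda>y. ket (2 ^ n) M y + ket (2 ^ n) (M - 1) y", OF _ jn])
      using vs apply blast
      using jM M1 by (auto simp: ket_def inv x1 x2' N)
  qed
qed

end
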